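(* Let $S$ be an intra-regular $\Gamma$-AG$^{**}$-groupoid and let $B$ be a $\Gamma$-bi-ideal (or a $\Gamma$-generalized bi-ideal) of $S$. Then $(B\Gamma S)\Gamma B=B\cap S=B$.
   Context: Let $S$ and $\Gamma$ be nonempty sets with a map $S\times\Gamma\times S\to S$, $(x,\gamma,y)\mapsto x\gamma y$. $S$ is a $\Gamma$-AG-groupoid if $(x\gamma y)\delta z=(z\gamma y)\delta x$ for all $x,y,z\in S$, $\gamma,\delta\in\Gamma$; it is a $\Gamma$-AG$^{**}$-groupoid if moreover $a\alpha(b\beta c)=b\alpha(a\beta c)$ for all $a,b,c\in S$, $\alpha,\beta\in\Gamma$. For subsets $A,B\subseteq S$, $A\Gamma B=\{a\gamma b: a\in A,\gamma\in\Gamma,b\in B\}$. $S$ is intra-regular if for every $a\in S$ there exist $x,y\in S$ and $\beta,\gamma,\delta\in\Gamma$ with $a=(x\beta(a\delta a))\gamma y$. A nonempty subset $B\subseteq S$ is a $\Gamma$-generalized bi-ideal if $(B\Gamma S)\Gamma B\subseteq B$, and a $\Gamma$-bi-ideal if in addition $B\Gamma B\subseteq B$. *)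

theory Defs
  imports Main
begin

definition gamma_closed :: "'a set \<Rightarrow> 'g set \<Rightarrow> ('a \<Rightarrow> 'g \<Rightarrow> 'a \<Rightarrow> 'a) \<Rightarrow> bool" where
  "gamma_closed S G m \<longleftrightarrow> S \<noteq> {} \<and> G \<noteq> {} \<and>
     (\<forall>x\<in>S. \<forall>g\<in>G. \<forall>y\<in>S. m x g y \<in> S)"

definition gamma_AG_groupoid :: "'a set \<Rightarrow> 'g set \<Rightarrow> ('a \<Rightarrow> 'g \<Rightarrow> 'a \<Rightarrow> 'a) \<Rightarrow> bool" where
  "gamma_AG_groupoid S G m \<longleftrightarrow> gamma_closed S G m \<and>
     (\<forall>x\<in>S. \<forall>y\<in>S. \<forall>z\<in>S. \<forall>g\<in>G. \<forall>d\<in>G. m (m x g y) d z = m (m z g y) d x)"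

definition gamma_AG2_groupoid :: "'a set \<Rightarrow> 'g set \<Rightarrow> ('a \<Rightarrow> 'g \<Rightarrow> 'a \<Rightarrow> 'a) \<Rightarrow> bool" where
  "gamma_AG2_groupoid S G m \<longleftrightarrow> gamma_AG_groupoid S G m \<and>
     (\<forall>a\<in>S. \<forall>b\<in>S. \<forall>c\<in>S. \<forall>al\<in>G. \<forall>be\<in>G. m a al (m b be c) = m b al (m a be c))"

definition gset_mult :: "('a \<Rightarrow> 'g \<Rightarrow> 'a \<Rightarrow> 'a) \<Rightarrow> 'a set \<Rightarrow> 'g set \<Rightarrow> 'a set \<Rightarrow> 'a set" where
  "gset_mult m A G B = {m a g b | a g b. a \<in> A \<and> g \<in> G \<and> b \<in> B}"

definition intra_regular :: "'a set \<Rightarrow> 'g set \<Rightarrow> ('a \<Rightarrow> 'g \<Rightarrow> 'a \<Rightarrow> 'a) \<Rightarrow> bool" where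
  "intra_regular S G m \<longleftrightarrow> (\<forall>a\<in>S. \<exists>x\<in>S. \<exists>y\<in>S. \<exists>be\<in>G. \<exists>ga\<in>G. \<exists>de\<in>G.
      a = m (m x be (m a de a)) ga y)"

definition gamma_gen_bi_ideal :: "'a set \<Rightarrow> 'g set \<Rightarrow> ('a \<Rightarrow> 'g \<Rightarrow> 'a \<Rightarrow> 'a) \<Rightarrow> 'a set \<Rightarrow> bool" where
  "gamma_gen_bi_ideal S G m B \<longleftrightarrow> B \<noteq> {} \<and> B \<subseteq> S \<and>
     gset_mult m (gset_mult m B G S) G B \<subseteq> B"

definition gamma_bi_ideal :: "'a set \<Rightarrow> 'g set \<Rightarrow> ('a \<Rightarrow> 'g \<Rightarrow> 'a \<Rightarrow> 'a) \<Rightarrow> 'a set \<Rightarrow> bool" where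
  "gamma_bi_ideal S G m B \<longleftrightarrow> gamma_gen_bi_ideal S G m B \<and> gset_mult m B G B \<subseteq> B"

end

theory Submission
  imports Defs
begin

lemma key:
  assumes AG2: "gamma_AG2_groupoid S G m"
    and IR: "intra_regular S G m"
    and a: "a \<in> S"
  shows "\<exists>s\<in>S. \<exists>b\<in>G. \<exists>g\<in>G. a = m (m a b s) g a"
proof -
  have cl: "\<And>x g y. x \<in> S \<Longrightarrow> g \<in> G \<Longrightarrow> y \<in> S \<Longrightarrow> m x g y \<in> S"
    using AG2 unfolding gamma_AG2_groupoid_def gamma_AG_groupoid_def gamma_closed_def by blast
  have LI: "\<And>x y z g d. x \<in> S \<Longrightarrow> y \<in> S \<Longrightarrow> z \<in> S \<Longrightarrow> g \<in> G \<Longrightarrow> d \<in> G \<Longrightarrow>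
      m (m x g y) d z = m (m z g y) d x"
    using AG2 unfolding gamma_AG2_groupoid_def gamma_AG_groupoid_def by blast
  have AG: "\<And>x y z g d. x \<in> S \<Longrightarrow> y \<in> S \<Longrightarrow> z \<in> S \<Longrightarrow> g \<in> G \<Longrightarrow> d \<in> G \<Longrightarrow>
      m x g (m y d z) = m y g (m x d z)"
    using AG2 unfolding gamma_AG2_groupoid_def by blast
  obtain x y b g d where x: "x \<in> S" and y: "y \<in> S" and b: "b \<in> G" and g: "g \<in> G" and d: "d \<in> G"
    and T0: "a = m (m x b (m a d a)) g y"
    using IR a unfolding intra_regular_def by blast
  define P where "P = m x b (m a d a)"
  define R where "R = m x g y"
  have P: "P \<in> S" unfolding P_def using x a b d cl by blast
  have R: "R \<in> S" unfolding R_def using x y g cl by blast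
  have T0': "a = m P g y" using T0 P_def by simp
  have "a = m (m a b (m x d a)) g y" using T0 AG[OF x a a b d] by simp
  also have "\<dots> = m (m y b (m x d a)) g a" using LI[OF a _ y b g] cl x d a by blast
  finally have T2: "a = m (m y b (m x d a)) g a" .
  have "m x d a = m P d R"
    using T0' AG[OF x P y d g] R_def by simp
  hence "m y b (m x d a) = m P b (m y d R)" using AG[OF y P R b d] by simp
  hence T5: "a = m (m P b (m y d R)) g a" using T2 by simp
  have "P = m x b (m (m P g y) d a)" using P_def T0' by simp
  also have "m (m P g y) d a = m (m a g y) d P" using LI[OF P y a g d] .
  finally have "P = m x b (m (m a g y) d P)" .
  also have "\<dots> = m (m a g y) b (m x d P)" using AG[OF x _ P b d] cl a g y by blast
  finally have P': "P = m (m a g y) b (m x d P)" .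
  define W where "W = m (m y d R) b (m x d P)"
  have W: "W \<in> S" unfolding W_def using cl x y d b P R by blast
  have "m P b (m y d R) = m (m (m a g y) b (m x d P)) b (m y d R)" using P' by simp
  also have "\<dots> = m W b (m a g y)" unfolding W_def
    using LI[of "m a g y" "m x d P" "m y d R" b b] cl a g y x d P R b by blast
  also have "\<dots> = m a b (m W g y)" using AG[OF W a y b g] .
  finally have "a = m (m a b (m W g y)) g a" using T5 by simp
  moreover have "m W g y \<in> S" using cl W g y by blast
  ultimately show ?thesis using b g by blast
qed

theorem mainTheorem2:
  fixes S :: "'a set" and G :: "'g set" and m :: "'a \<Rightarrow> 'g \<Rightarrow> 'a \<Rightarrow> 'a" and B :: "'a set"
  assumes "gamma_AG2_groupoid S G m"
    and "intra_regular S G m"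
    and "gamma_bi_ideal S G m B \<or> gamma_gen_bi_ideal S G m B"
  shows "gset_mult m (gset_mult m B G S) G B = B \<inter> S \<and> B \<inter> S = B"
proof -
  have gb: "gamma_gen_bi_ideal S G m B" using assms(3) unfolding gamma_bi_ideal_def by blast
  hence BS: "B \<subseteq> S" and sub: "gset_mult m (gset_mult m B G S) G B \<subseteq> B"
    unfolding gamma_gen_bi_ideal_def by auto
  have "B \<subseteq> gset_mult m (gset_mult m B G S) G B"
  proof
    fix a assume aB: "a \<in> B"
    then obtain s b g where "s \<in> S" "b \<in> G" "g \<in> G" "a = m (m a b s) g a"
      using key[OF assms(1,2)] BS by blast
    thus "a \<in> gset_mult m (gset_mult m B G S) G B"
      unfolding gset_mult_def using aB by blast
  qed
  thus ?thesis using sub BS by blast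
qed

end
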